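(* Let $\mathfrak{A}$ be a class of transitive dynamical systems. Suppose that $\mathfrak{A}$ contains at least one system $(X,f)$ having a point $x\in X$ with dense orbit $\{f^n(x):n\ge 0\}$ such that the points $f^i(x)$, $i\in\mathbb{N}$, are pairwise distinct (a non-periodic system), and suppose there exists some strongly mixing dynamical system which is not in $\mathfrak{A}$. Then there is no Furstenberg family $\mathcal{F}$ such that for every dynamical system $(Y,g)$: $(Y,g)\in\mathfrak{A}$ if and only if $(Y,g)$ is $\mathcal{F}$-transitive.
   Context: A dynamical system is a pair $(X,f)$ with $X$ a compact metric space and $f:X\to X$ continuous. $\mathbb{N}=\{1,2,\dots\}$. For subsets $U,V\subset X$, $N(U,V)=\{n\in\mathbb{N}: U\cap f^{-n}(V)\neq\emptyset\}$. $(X,f)$ is transitive if $N(U,V)\ne\emptyset$ for all non-empty open $U,V\subset X$, and strongly mixing if $N(U,V)$ is cofinite for all non-empty open $U,V$. A Furstenberg family is a collection $\mathcal{F}$ of subsets of $\mathbb{N}$ such that $F_1\subset F_2$ and $F_1\in\mathcal{F}$ imply $F_2\in\mathcal{F}$. $(X,f)$ is $\mathcal{F}$-transitive if $N(U,V)\in\mathcal{F}$ for all non-empty open $U,V\subset X$. *)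

theory Defs
  imports "HOL-Analysis.Analysis"
begin

definition dynsys :: "'a::metric_space set \<Rightarrow> ('a \<Rightarrow> 'a) \<Rightarrow> bool" where
  "dynsys X f \<longleftrightarrow> compact X \<and> continuous_on X f \<and> f ` X \<subseteq> X"

definition hitting_times :: "'a set \<Rightarrow> ('a \<Rightarrow> 'a) \<Rightarrow> 'a set \<Rightarrow> 'a set \<Rightarrow> nat set" where
  "hitting_times X f U V = {n. n \<ge> 1 \<and> (\<exists>x\<in>U \<inter> X. (f ^^ n) x \<in> V)}"

definition transitive_sys :: "'a::metric_space set \<Rightarrow> ('a \<Rightarrow> 'a) \<Rightarrow> bool" where
  "transitive_sys X f \<longleftrightarrow> (\<forall>U V. openin (top_of_set X) U \<and> U \<noteq> {} \<and>
      openin (top_of_set X) V \<and> V \<noteq> {} \<longrightarrow> hitting_times X f U V \<noteq> {})"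

definition strongly_mixing :: "'a::metric_space set \<Rightarrow> ('a \<Rightarrow> 'a) \<Rightarrow> bool" where
  "strongly_mixing X f \<longleftrightarrow> (\<forall>U V. openin (top_of_set X) U \<and> U \<noteq> {} \<and>
      openin (top_of_set X) V \<and> V \<noteq> {} \<longrightarrow> finite ({1..} - hitting_times X f U V))"

definition furstenberg_family :: "nat set set \<Rightarrow> bool" where
  "furstenberg_family \<F> \<longleftrightarrow> (\<forall>F\<in>\<F>. F \<subseteq> {1..}) \<and>
      (\<forall>F1 F2. F1 \<in> \<F> \<and> F1 \<subseteq> F2 \<and> F2 \<subseteq> {1..} \<longrightarrow> F2 \<in> \<F>)"

definition F_transitive :: "nat set set \<Rightarrow> 'a::metric_space set \<Rightarrow> ('a \<Rightarrow> 'a) \<Rightarrow> bool" where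
  "F_transitive \<F> X f \<longleftrightarrow> (\<forall>U V. openin (top_of_set X) U \<and> U \<noteq> {} \<and>
      openin (top_of_set X) V \<and> V \<noteq> {} \<longrightarrow> hitting_times X f U V \<in> \<F>)"

definition nonperiodic_sys :: "'a::metric_space set \<Rightarrow> ('a \<Rightarrow> 'a) \<Rightarrow> bool" where
  "nonperiodic_sys X f \<longleftrightarrow> (\<exists>x\<in>X. X \<subseteq> closure (range (\<lambda>n. (f ^^ n) x)) \<and>
      inj_on (\<lambda>i. (f ^^ i) x) {1..})"

end

theory Submission
  imports Defs
begin

lemma iter_cont:
  assumes "continuous_on X f" "f ` X \<subseteq> X"
  shows "continuous_on X (f ^^ n) \<and> (f ^^ n) ` X \<subseteq> X"
proof (induction n)
  case 0 then show ?case by (simp add: continuous_on_id)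
next
  case (Suc n)
  then have c: "continuous_on X (f ^^ n)" and s: "(f ^^ n) ` X \<subseteq> X" by auto
  have "continuous_on X (f \<circ> (f ^^ n))"
    by (rule continuous_on_compose[OF c continuous_on_subset[OF assms(1) s]])
  moreover have "(f ^^ Suc n) ` X \<subseteq> X" using s assms(2) by auto
  ultimately show ?case by simp
qed

lemma openin_finite_all:
  assumes "finite S" "\<And>n. n \<in> S \<Longrightarrow> openin (top_of_set X) {z\<in>X. P n z}"
  shows "openin (top_of_set X) {z\<in>X. \<forall>n\<in>S. P n z}"
  using assms
proof (induction S rule: finite_induct)
  case empty then show ?case by simp
next
  case (insert a S)
  have "{z\<in>X. \<forall>n\<in>insert a S. P n z} = {z\<in>X. P a z} \<inter> {z\<in>X. \<forall>n\<in>S. P n z}" by auto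
  then show ?case using insert by (simp add: openin_Int)
qed

lemma key:
  assumes ds: "dynsys X f" and xX: "x \<in> X" and inj: "inj_on (\<lambda>i. (f ^^ i) x) {1..}"
    and fin: "finite S" and S1: "S \<subseteq> {1..}"
  shows "\<exists>U V. openin (top_of_set X) U \<and> U \<noteq> {} \<and> openin (top_of_set X) V \<and> V \<noteq> {}
           \<and> hitting_times X f U V \<inter> S = {}"
proof -
  have cf: "continuous_on X f" and fX: "f ` X \<subseteq> X" using ds by (auto simp: dynsys_def)
  define y where "y = f x"
  have yX: "y \<in> X" using xX fX y_def by auto
  have neq: "(f ^^ n) y \<noteq> y" if "n \<in> S" for n
  proof
    assume h: "(f ^^ n) y = y"
    have "(f ^^ (n+1)) x = (f ^^ n) y" by (simp add: y_def funpow_Suc_right del: funpow.simps)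
    also have "\<dots> = (f ^^ 1) x" using h y_def by simp
    finally have "(f ^^ (n+1)) x = (f ^^ 1) x" .
    moreover have "n + 1 \<in> {1..}" "(1::nat) \<in> {1..}" by auto
    ultimately have "n + 1 = 1" using inj unfolding inj_on_def by blast
    then show False using that S1 by auto
  qed
  define d where "d = (\<lambda>n. dist ((f ^^ n) y) y)"
  define e where "e = (if S = {} then 1 else Min (d ` S)) / 2"
  have dpos: "d n > 0" if "n \<in> S" for n using neq[OF that] d_def by simp
  have epos: "e > 0" using dpos fin by (auto simp: e_def)
  have ele: "2 * e \<le> d n" if "n \<in> S" for n using that fin by (auto simp: e_def)
  define V where "V = X \<inter> ball y e"
  define U where "U = {z\<in>X. \<forall>n\<in>S. (f ^^ n) z \<in> ball ((f ^^ n) y) e}"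
  have oV: "openin (top_of_set X) V" unfolding V_def by (simp add: openin_open_Int)
  have oU: "openin (top_of_set X) U" unfolding U_def
  proof (rule openin_finite_all[OF fin])
    fix n
    have c: "continuous_on X (f ^^ n)" using iter_cont[OF cf fX] by blast
    have "openin (top_of_set X) (X \<inter> (f ^^ n) -` ball ((f ^^ n) y) e)"
      by (rule continuous_openin_preimage_gen[OF c]) auto
    moreover have "X \<inter> (f ^^ n) -` ball ((f ^^ n) y) e = {z\<in>X. (f ^^ n) z \<in> ball ((f ^^ n) y) e}" by auto
    ultimately show "openin (top_of_set X) {z\<in>X. (f ^^ n) z \<in> ball ((f ^^ n) y) e}" by simp
  qed
  have yU: "y \<in> U" using yX epos by (simp add: U_def)
  have yV: "y \<in> V" using yX epos by (simp add: V_def)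
  have "hitting_times X f U V \<inter> S = {}"
  proof (rule ccontr)
    assume "hitting_times X f U V \<inter> S \<noteq> {}"
    then obtain n z where nS: "n \<in> S" and zU: "z \<in> U" and zV: "(f ^^ n) z \<in> V"
      by (auto simp: hitting_times_def)
    have a: "dist ((f ^^ n) y) ((f ^^ n) z) < e" using zU nS by (auto simp: U_def)
    have b: "dist y ((f ^^ n) z) < e" using zV by (auto simp: V_def)
    have "d n \<le> dist ((f ^^ n) y) ((f ^^ n) z) + dist y ((f ^^ n) z)"
      unfolding d_def by (metis dist_triangle2)
    then show False using a b ele[OF nS] by linarith
  qed
  moreover have "U \<noteq> {}" "V \<noteq> {}" using yU yV by auto
  ultimately show ?thesis using oU oV by blast
qed

theorem proposition3p1:
  fixes \<A> :: "'a::metric_space set \<Rightarrow> ('a \<Rightarrow> 'a) \<Rightarrow> bool"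
  assumes "\<And>X f. \<A> X f \<Longrightarrow> dynsys X f \<and> transitive_sys X f"
    and "\<exists>X f. \<A> X f \<and> nonperiodic_sys X f"
    and "\<exists>Y g. dynsys Y g \<and> strongly_mixing Y g \<and> \<not> \<A> Y g"
  shows "\<not> (\<exists>\<F>. furstenberg_family \<F> \<and>
           (\<forall>Y g. dynsys Y g \<longrightarrow> (\<A> Y g \<longleftrightarrow> F_transitive \<F> Y g)))"
proof
  assume "\<exists>\<F>. furstenberg_family \<F> \<and>
           (\<forall>Y g. dynsys Y g \<longrightarrow> (\<A> Y g \<longleftrightarrow> F_transitive \<F> Y g))"
  then obtain \<F> where ff: "furstenberg_family \<F>"
    and eq: "\<And>Y g. dynsys Y g \<Longrightarrow> (\<A> Y g \<longleftrightarrow> F_transitive \<F> Y g)" by blast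
  obtain X f where AX: "\<A> X f" and np: "nonperiodic_sys X f" using assms(2) by blast
  have dsX: "dynsys X f" using assms(1)[OF AX] by blast
  have FX: "F_transitive \<F> X f" using eq[OF dsX] AX by blast
  obtain x where xX: "x \<in> X" and inj: "inj_on (\<lambda>i. (f ^^ i) x) {1..}"
    using np by (auto simp: nonperiodic_sys_def)
  have cof: "C \<in> \<F>" if C1: "C \<subseteq> {1..}" and C2: "finite ({1..} - C)" for C
  proof -
    obtain U V where UV: "openin (top_of_set X) U" "U \<noteq> {}" "openin (top_of_set X) V" "V \<noteq> {}"
      and dj: "hitting_times X f U V \<inter> ({1..} - C) = {}"
      using key[OF dsX xX inj C2 Diff_subset] by blast
    have "hitting_times X f U V \<in> \<F>" using FX UV by (auto simp: F_transitive_def)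
    moreover have "hitting_times X f U V \<subseteq> C" using dj by (auto simp: hitting_times_def)
    ultimately show ?thesis using ff C1 unfolding furstenberg_family_def by blast
  qed
  obtain Y g where dsY: "dynsys Y g" and sm: "strongly_mixing Y g" and nA: "\<not> \<A> Y g"
    using assms(3) by blast
  have "F_transitive \<F> Y g"
    unfolding F_transitive_def
  proof (intro allI impI)
    fix U V assume h: "openin (top_of_set Y) U \<and> U \<noteq> {} \<and> openin (top_of_set Y) V \<and> V \<noteq> {}"
    show "hitting_times Y g U V \<in> \<F>"
    proof (rule cof)
      show "hitting_times Y g U V \<subseteq> {1..}" by (auto simp: hitting_times_def)
      show "finite ({1..} - hitting_times Y g U V)" using sm h unfolding strongly_mixing_def by blast
    qed
  qed
  then show False using eq[OF dsY] nA by blast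
qed

end
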